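(* Let $\mathbb{G}$ be a compact quantum group equipped with a proper length function $\ell:\operatorname{Irred}(\mathbb{G})\to\mathbb{N}_0$. Then $\bigl(F(\mathbb{G}),\ell^2(\operatorname{Irred}(\mathbb{G})),\tilde D_\ell\bigr)$ is a spectral triple: $\tilde D_\ell$ is self-adjoint with compact resolvent, and $[\tilde D_\ell,\pi(f)]$ is bounded for every $f\in F(\mathbb{G})$.
   Context: $\operatorname{Irred}(\mathbb{G})$: representatives of irreducible unitary corepresentations of the compact quantum group $\mathbb{G}$, with dimension $d(\alpha)$, trivial corepresentation $e$, conjugate $\bar\alpha$. A length function $\ell$ satisfies $\ell(e)=0$, $\ell(\bar\alpha)=\ell(\alpha)$, $\ell(\gamma)\le\ell(\alpha)+\ell(\beta)$ whenever $\gamma\subset\alpha\otimes\beta$; proper: $\ell^{-1}([0,N])$ finite for all $N$ and $\ell(\alpha)=0$ only for $\alpha=e$. The fusion algebra $F(\mathbb{G})$ has basis $\operatorname{Irred}(\mathbb{G})$ and product $\alpha\beta=\sum_\gamma N^\gamma_{\alpha,\beta}\gamma$ ($N^\gamma_{\alpha,\beta}$ = multiplicity of $\gamma$ in $\alpha\otimes\beta$). $\ell^2(\operatorname{Irred}(\mathbb{G}))$ is its completion with $\operatorname{Irred}(\mathbb{G})$ orthogonal and $\langle\alpha,\alpha\rangle=d(\alpha)^2$; $\pi(f)$ is the bounded extension of left multiplication by $f$. $\tilde D_\ell$ is the (closure of the) diagonal operator $\tilde D_\ell(\alpha)=\ell(\alpha)\alpha$. *)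

theory Defs
  imports "HOL-Analysis.Analysis"
begin

text \<open>Irred(G) is modelled by a type 'a. e = trivial corepresentation, cj = conjugation,
  d = dimension, N a b c = multiplicity of c in a (x) b.\<close>

definition cqg_fusion_data ::
  "'a \<Rightarrow> ('a \<Rightarrow> 'a) \<Rightarrow> ('a \<Rightarrow> nat) \<Rightarrow> ('a \<Rightarrow> 'a \<Rightarrow> 'a \<Rightarrow> nat) \<Rightarrow> bool" where
  "cqg_fusion_data e cj d N \<longleftrightarrow>
     (\<forall>a. d a \<ge> 1) \<and>
     (\<forall>a. cj (cj a) = a) \<and> cj e = e \<and>
     (\<forall>a. d (cj a) = d a) \<and>
     (\<forall>a b. finite {c. N a b c \<noteq> 0}) \<and>
     (\<forall>a c. N e a c = (if c = a then 1 else 0)) \<and>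
     (\<forall>a c. N a e c = (if c = a then 1 else 0)) \<and>
     (\<forall>a b. N a b e = (if b = cj a then 1 else 0)) \<and>
     (\<forall>a b c. N a b c = N (cj a) c b) \<and>
     (\<forall>a b c. N a b c = N c (cj b) a) \<and>
     (\<forall>a b. d a * d b = (\<Sum>c\<in>{c. N a b c \<noteq> 0}. N a b c * d c)) \<and>
     (\<forall>a b c y. (\<Sum>x\<in>{x. N a b x \<noteq> 0}. N a b x * N x c y) =
                 (\<Sum>x\<in>{x. N b c x \<noteq> 0}. N b c x * N a x y))"

definition length_function ::
  "'a \<Rightarrow> ('a \<Rightarrow> 'a) \<Rightarrow> ('a \<Rightarrow> 'a \<Rightarrow> 'a \<Rightarrow> nat) \<Rightarrow> ('a \<Rightarrow> nat) \<Rightarrow> bool" where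
  "length_function e cj N l \<longleftrightarrow>
     l e = 0 \<and> (\<forall>a. l (cj a) = l a) \<and>
     (\<forall>a b c. N a b c \<noteq> 0 \<longrightarrow> l c \<le> l a + l b)"

definition proper_length_function ::
  "'a \<Rightarrow> ('a \<Rightarrow> 'a) \<Rightarrow> ('a \<Rightarrow> 'a \<Rightarrow> 'a \<Rightarrow> nat) \<Rightarrow> ('a \<Rightarrow> nat) \<Rightarrow> bool" where
  "proper_length_function e cj N l \<longleftrightarrow>
     length_function e cj N l \<and>
     (\<forall>n. finite {a. l a \<le> n}) \<and> (\<forall>a. l a = 0 \<longrightarrow> a = e)"

text \<open>A vector is written by its coefficients x :: 'a => complex w.r.t. the orthogonal
  basis Irred(G), where <a,a> = d(a)^2.\<close>

definition l2 :: "('a \<Rightarrow> nat) \<Rightarrow> ('a \<Rightarrow> complex) set" where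
  "l2 d = {x. (\<lambda>a. (real (d a))\<^sup>2 * (cmod (x a))\<^sup>2) summable_on UNIV}"

definition l2_inner :: "('a \<Rightarrow> nat) \<Rightarrow> ('a \<Rightarrow> complex) \<Rightarrow> ('a \<Rightarrow> complex) \<Rightarrow> complex" where
  "l2_inner d x y = infsum (\<lambda>a. of_nat ((d a)\<^sup>2) * cnj (x a) * y a) UNIV"

definition l2_norm :: "('a \<Rightarrow> nat) \<Rightarrow> ('a \<Rightarrow> complex) \<Rightarrow> real" where
  "l2_norm d x = sqrt (infsum (\<lambda>a. (real (d a))\<^sup>2 * (cmod (x a))\<^sup>2) UNIV)"

definition dense_in_l2 :: "('a \<Rightarrow> nat) \<Rightarrow> ('a \<Rightarrow> complex) set \<Rightarrow> bool" where
  "dense_in_l2 d S \<longleftrightarrow> S \<subseteq> l2 d \<and>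
     (\<forall>x\<in>l2 d. \<forall>\<epsilon>>0. \<exists>y\<in>S. l2_norm d (x - y) < \<epsilon>)"

definition adjoint_graph ::
  "('a \<Rightarrow> nat) \<Rightarrow> ('a \<Rightarrow> complex) set \<Rightarrow> (('a \<Rightarrow> complex) \<Rightarrow> ('a \<Rightarrow> complex))
     \<Rightarrow> (('a \<Rightarrow> complex) \<times> ('a \<Rightarrow> complex)) set" where
  "adjoint_graph d S T = {(y, z). y \<in> l2 d \<and> z \<in> l2 d \<and>
      (\<forall>x\<in>S. l2_inner d (T x) y = l2_inner d x z)}"

definition self_adjoint ::
  "('a \<Rightarrow> nat) \<Rightarrow> ('a \<Rightarrow> complex) set \<Rightarrow> (('a \<Rightarrow> complex) \<Rightarrow> ('a \<Rightarrow> complex)) \<Rightarrow> bool" where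
  "self_adjoint d S T \<longleftrightarrow> dense_in_l2 d S \<and> (\<forall>x\<in>S. T x \<in> l2 d) \<and>
     adjoint_graph d S T = {(x, T x) | x. x \<in> S}"

definition compact_operator ::
  "('a \<Rightarrow> nat) \<Rightarrow> (('a \<Rightarrow> complex) \<Rightarrow> ('a \<Rightarrow> complex)) \<Rightarrow> bool" where
  "compact_operator d R \<longleftrightarrow> (\<forall>x\<in>l2 d. R x \<in> l2 d) \<and>
     (\<forall>(xs :: nat \<Rightarrow> 'a \<Rightarrow> complex) B. (\<forall>n. xs n \<in> l2 d \<and> l2_norm d (xs n) \<le> B) \<longrightarrow>
        (\<exists>r z. strict_mono r \<and> z \<in> l2 d \<and>
               (\<lambda>n. l2_norm d (R (xs (r n)) - z)) \<longlonglongrightarrow> 0))"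

definition has_compact_resolvent ::
  "('a \<Rightarrow> nat) \<Rightarrow> ('a \<Rightarrow> complex) set \<Rightarrow> (('a \<Rightarrow> complex) \<Rightarrow> ('a \<Rightarrow> complex)) \<Rightarrow> bool" where
  "has_compact_resolvent d S T \<longleftrightarrow>
     (\<exists>R. (\<forall>y\<in>l2 d. R y \<in> S \<and> (\<lambda>a. T (R y) a - \<i> * R y a) = y) \<and>
          (\<forall>x\<in>S. R (\<lambda>a. T x a - \<i> * x a) = x) \<and>
          compact_operator d R)"

definition bounded_commutator ::
  "('a \<Rightarrow> nat) \<Rightarrow> ('a \<Rightarrow> complex) set \<Rightarrow> (('a \<Rightarrow> complex) \<Rightarrow> ('a \<Rightarrow> complex))
     \<Rightarrow> (('a \<Rightarrow> complex) \<Rightarrow> ('a \<Rightarrow> complex)) \<Rightarrow> bool" where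
  "bounded_commutator d S T P \<longleftrightarrow> (\<forall>x\<in>S. P x \<in> S) \<and>
     (\<exists>C. \<forall>x\<in>S. l2_norm d (T (P x) - P (T x)) \<le> C * l2_norm d x)"

definition closure_graph ::
  "('a \<Rightarrow> nat) \<Rightarrow> ('a \<Rightarrow> complex) set \<Rightarrow> (('a \<Rightarrow> complex) \<Rightarrow> ('a \<Rightarrow> complex))
     \<Rightarrow> (('a \<Rightarrow> complex) \<times> ('a \<Rightarrow> complex)) set" where
  "closure_graph d S T = {(x, y). x \<in> l2 d \<and> y \<in> l2 d \<and>
     (\<exists>xs :: nat \<Rightarrow> 'a \<Rightarrow> complex. (\<forall>n. xs n \<in> S) \<and> (\<lambda>n. l2_norm d (xs n - x)) \<longlonglongrightarrow> 0 \<and>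
           (\<lambda>n. l2_norm d (T (xs n) - y)) \<longlonglongrightarrow> 0)}"

definition fin_supp :: "('a \<Rightarrow> complex) set" where
  "fin_supp = {x. finite {a. x a \<noteq> 0}}"

text \<open>F(G): finite linear combinations of elements of Irred(G).\<close>
abbreviation fusion_algebra :: "('a \<Rightarrow> complex) set" where
  "fusion_algebra \<equiv> fin_supp"

text \<open>pi(f): left multiplication by f, c-th coefficient of f * x.  On finitely supported x
  this is left multiplication in F(G); the same coordinatewise formula (a finite sum for
  each c) gives its bounded extension to l^2.\<close>
definition fusion_pi ::
  "('a \<Rightarrow> 'a \<Rightarrow> 'a \<Rightarrow> nat) \<Rightarrow> ('a \<Rightarrow> complex) \<Rightarrow> ('a \<Rightarrow> complex) \<Rightarrow> ('a \<Rightarrow> complex)" where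
  "fusion_pi N f x = (\<lambda>c. \<Sum>a\<in>{a. f a \<noteq> 0}. f a *
      (\<Sum>b\<in>{b. N a b c \<noteq> 0}. of_nat (N a b c) * x b))"

definition diag_op :: "('a \<Rightarrow> nat) \<Rightarrow> ('a \<Rightarrow> complex) \<Rightarrow> ('a \<Rightarrow> complex)" where
  "diag_op l x = (\<lambda>a. of_nat (l a) * x a)"

definition Dt_dom :: "('a \<Rightarrow> nat) \<Rightarrow> ('a \<Rightarrow> nat) \<Rightarrow> ('a \<Rightarrow> complex) set" where
  "Dt_dom d l = Domain (closure_graph d fin_supp (diag_op l))"

definition Dt :: "('a \<Rightarrow> nat) \<Rightarrow> ('a \<Rightarrow> nat) \<Rightarrow> ('a \<Rightarrow> complex) \<Rightarrow> ('a \<Rightarrow> complex)" where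
  "Dt d l x = (THE y. (x, y) \<in> closure_graph d fin_supp (diag_op l))"

end

theory Submission
  imports Defs "HOL-Library.Diagonal_Subsequence"
begin

definition nsq :: "('a \<Rightarrow> nat) \<Rightarrow> ('a \<Rightarrow> complex) \<Rightarrow> 'a \<Rightarrow> real" where
  "nsq d x = (\<lambda>a. (real (d a))\<^sup>2 * (cmod (x a))\<^sup>2)"

definition Wt :: "('a \<Rightarrow> nat) \<Rightarrow> ('a \<Rightarrow> complex) \<Rightarrow> real" where
  "Wt d x = infsum (nsq d x) UNIV"

lemma l2_iff: "x \<in> l2 d \<longleftrightarrow> nsq d x summable_on UNIV"
  by (simp add: l2_def nsq_def)

lemma l2_norm_Wt: "l2_norm d x = sqrt (Wt d x)"
  by (simp add: l2_norm_def Wt_def nsq_def)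

lemma nsq_nonneg: "nsq d x a \<ge> 0"
  by (simp add: nsq_def)

lemma Wt_nonneg: "Wt d x \<ge> 0"
  unfolding Wt_def by (rule infsum_nonneg) (simp add: nsq_nonneg)

lemma l2_compare:
  assumes x: "x \<in> l2 d" and le: "\<And>a. cmod (y a) \<le> c * cmod (x a)"
  shows "y \<in> l2 d \<and> Wt d y \<le> c\<^sup>2 * Wt d x"
proof -
  have pt: "nsq d y a \<le> c\<^sup>2 * nsq d x a" for a
  proof -
    have "(cmod (y a))\<^sup>2 \<le> (c * cmod (x a))\<^sup>2"
      using le[of a] by (intro power_mono) auto
    then have "(real (d a))\<^sup>2 * (cmod (y a))\<^sup>2 \<le> (real (d a))\<^sup>2 * (c * cmod (x a))\<^sup>2"
      by (rule mult_left_mono) simp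
    then show ?thesis unfolding nsq_def by (simp add: power_mult_distrib algebra_simps)
  qed
  have s: "(\<lambda>a. c\<^sup>2 * nsq d x a) summable_on UNIV"
    using x by (intro summable_on_cmult_right) (simp add: l2_iff)
  have ys: "nsq d y summable_on UNIV"
    by (rule summable_on_comparison_test[OF s]) (use pt nsq_nonneg in auto)
  have "Wt d y \<le> infsum (\<lambda>a. c\<^sup>2 * nsq d x a) UNIV"
    unfolding Wt_def by (rule infsum_mono[OF ys s pt])
  also have "\<dots> = c\<^sup>2 * Wt d x" unfolding Wt_def by (rule infsum_cmult_right') 
  finally show ?thesis using ys by (simp add: l2_iff)
qed

lemma l2_add:
  assumes x: "x \<in> l2 d" and y: "y \<in> l2 d"
  shows "(\<lambda>a. x a + y a) \<in> l2 d \<and> Wt d (\<lambda>a. x a + y a) \<le> 2 * Wt d x + 2 * Wt d y"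
proof -
  have pt: "nsq d (\<lambda>a. x a + y a) a \<le> 2 * nsq d x a + 2 * nsq d y a" for a
  proof -
    have "(cmod (x a + y a))\<^sup>2 \<le> (cmod (x a) + cmod (y a))\<^sup>2"
      by (intro power_mono norm_triangle_ineq) auto
    also have "\<dots> \<le> 2 * (cmod (x a))\<^sup>2 + 2 * (cmod (y a))\<^sup>2"
    proof -
      have "0 \<le> (cmod (x a) - cmod (y a))\<^sup>2" by simp
      then show ?thesis by (simp add: power2_eq_square algebra_simps)
    qed
    finally have "(cmod (x a + y a))\<^sup>2 \<le> 2 * (cmod (x a))\<^sup>2 + 2 * (cmod (y a))\<^sup>2" .
    then have "(real (d a))\<^sup>2 * (cmod (x a + y a))\<^sup>2 \<le> (real (d a))\<^sup>2 * (2 * (cmod (x a))\<^sup>2 + 2 * (cmod (y a))\<^sup>2)"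
      by (rule mult_left_mono) simp
    then show ?thesis unfolding nsq_def by (simp add: algebra_simps)
  qed
  have s: "(\<lambda>a. 2 * nsq d x a + 2 * nsq d y a) summable_on UNIV"
    using x y by (intro summable_on_add summable_on_cmult_right) (simp_all add: l2_iff)
  have ys: "nsq d (\<lambda>a. x a + y a) summable_on UNIV"
    by (rule summable_on_comparison_test[OF s]) (use pt nsq_nonneg in auto)
  have "Wt d (\<lambda>a. x a + y a) \<le> infsum (\<lambda>a. 2 * nsq d x a + 2 * nsq d y a) UNIV"
    unfolding Wt_def by (rule infsum_mono[OF ys s pt])
  also have "\<dots> = 2 * Wt d x + 2 * Wt d y" unfolding Wt_def
    using x y by (subst infsum_add) (auto simp: l2_iff infsum_cmult_right' intro: summable_on_cmult_right)
  finally show ?thesis using ys by (simp add: l2_iff)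
qed

lemma l2_uminus: "x \<in> l2 d \<Longrightarrow> - x \<in> l2 d \<and> Wt d (- x) = Wt d x"
  by (simp add: l2_iff Wt_def nsq_def)

lemma l2_diff:
  assumes x: "x \<in> l2 d" and y: "y \<in> l2 d"
  shows "x - y \<in> l2 d \<and> Wt d (x - y) \<le> 2 * Wt d x + 2 * Wt d y"
  using l2_add[OF x l2_uminus[OF y, THEN conjunct1]] l2_uminus[OF y] by (simp add: fun_diff_def)

lemma Wt_cong: "(\<And>a. cmod (x a) = cmod (y a)) \<Longrightarrow> Wt d x = Wt d y"
  by (simp add: Wt_def nsq_def)

lemma l2_cong: "(\<And>a. cmod (x a) = cmod (y a)) \<Longrightarrow> x \<in> l2 d \<longleftrightarrow> y \<in> l2 d"
  by (simp add: l2_iff nsq_def)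

lemma l2_norm_commute: "l2_norm d (x - y) = l2_norm d (y - x)"
  unfolding l2_norm_Wt by (metis Wt_cong minus_apply norm_minus_commute)

lemma Wt_single: "x \<in> l2 d \<Longrightarrow> nsq d x a \<le> Wt d x"
  unfolding Wt_def
  using finite_sum_le_infsum[of "nsq d x" UNIV "{a}"] by (simp add: l2_iff nsq_nonneg)

lemma cmod_le_l2_norm:
  assumes "x \<in> l2 d" "d a \<ge> 1"
  shows "cmod (x a) \<le> l2_norm d x"
proof -
  have "(cmod (x a))\<^sup>2 \<le> nsq d x a"
  proof -
    have "1 \<le> (real (d a))\<^sup>2" using assms(2) by simp
    then show ?thesis unfolding nsq_def
      using mult_right_mono[of 1 "(real (d a))\<^sup>2" "(cmod (x a))\<^sup>2"] by simp
  qed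
  also have "\<dots> \<le> Wt d x" by (rule Wt_single[OF assms(1)])
  finally have "(cmod (x a))\<^sup>2 \<le> Wt d x" .
  then show ?thesis unfolding l2_norm_Wt by (rule real_le_rsqrt)
qed

lemma fin_supp_l2: "x \<in> fin_supp \<Longrightarrow> x \<in> l2 d"
proof -
  assume "x \<in> fin_supp"
  then have f: "finite {a. x a \<noteq> 0}" by (simp add: fin_supp_def)
  have "{a \<in> UNIV. nsq d x a \<noteq> 0} \<subseteq> {a. x a \<noteq> 0}" by (auto simp: nsq_def)
  then have "finite {a \<in> UNIV. nsq d x a \<noteq> 0}" using f finite_subset by blast
  then show ?thesis unfolding l2_iff by (rule finite_nonzero_values_imp_summable_on)
qed

definition trunc :: "('a \<Rightarrow> nat) \<Rightarrow> nat \<Rightarrow> ('a \<Rightarrow> complex) \<Rightarrow> 'a \<Rightarrow> complex" where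
  "trunc l n x = (\<lambda>a. if l a \<le> n then x a else 0)"

lemma tail_tendsto:
  assumes fin: "\<And>n. finite {a. l a \<le> n}" and x: "x \<in> l2 d"
  shows "(\<lambda>n. Wt d (\<lambda>a. if l a \<le> n then 0 else x a)) \<longlonglongrightarrow> 0"
proof -
  let ?f = "nsq d x"
  define S where "S = infsum ?f UNIV"
  have sm: "?f summable_on UNIV" using x by (simp add: l2_iff)
  have hs: "(?f has_sum S) UNIV" using sm by (simp add: S_def)
  have lim: "filterlim (\<lambda>n. {a. l a \<le> n}) (finite_subsets_at_top UNIV) sequentially"
    unfolding filterlim_finite_subsets_at_top
  proof (intro allI impI)
    fix X :: "'a set" assume "finite X \<and> X \<subseteq> UNIV"
    then have fX: "finite X" by simp
    have "X \<subseteq> {a. l a \<le> n}" if "n \<ge> Max (l ` X)" for n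
    proof
      fix a assume "a \<in> X"
      then have "l a \<le> Max (l ` X)" using fX by (intro Max_ge) auto
      then show "a \<in> {a. l a \<le> n}" using that by simp
    qed
    then show "eventually (\<lambda>n. finite {a. l a \<le> n} \<and> X \<subseteq> {a. l a \<le> n} \<and> {a. l a \<le> n} \<subseteq> UNIV) sequentially"
      unfolding eventually_sequentially using fin by blast
  qed
  have conv: "(\<lambda>n. sum ?f {a. l a \<le> n}) \<longlonglongrightarrow> S"
    using hs lim unfolding has_sum_def by (rule filterlim_compose)
  have eq: "Wt d (\<lambda>a. if l a \<le> n then 0 else x a) = S - sum ?f {a. l a \<le> n}" for n
  proof -
    have "Wt d (\<lambda>a. if l a \<le> n then 0 else x a) = infsum ?f (-{a. l a \<le> n})"
      unfolding Wt_def by (rule infsum_cong_neutral) (auto simp: nsq_def)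
    moreover have "S = infsum ?f {a. l a \<le> n} + infsum ?f (-{a. l a \<le> n})"
      unfolding S_def
      by (subst infsum_Un_disjoint[symmetric]) (auto intro: summable_on_subset[OF sm])
    moreover have "infsum ?f {a. l a \<le> n} = sum ?f {a. l a \<le> n}" using fin by simp
    ultimately show ?thesis by simp
  qed
  have "(\<lambda>n. S - sum ?f {a. l a \<le> n}) \<longlonglongrightarrow> S - S"
    by (intro tendsto_diff tendsto_const conv)
  then show ?thesis by (simp add: eq)
qed

lemma trunc_l2_norm_tendsto:
  assumes fin: "\<And>n. finite {a. l a \<le> n}" and x: "x \<in> l2 d"
  shows "(\<lambda>n. l2_norm d (trunc l n x - x)) \<longlonglongrightarrow> 0"
proof -
  have "Wt d (trunc l n x - x) = Wt d (\<lambda>a. if l a \<le> n then 0 else x a)" for n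
    by (rule Wt_cong) (simp add: trunc_def)
  then have "(\<lambda>n. Wt d (trunc l n x - x)) \<longlonglongrightarrow> 0" using tail_tendsto[OF fin x] by simp
  then have "(\<lambda>n. sqrt (Wt d (trunc l n x - x))) \<longlonglongrightarrow> sqrt 0" by (rule tendsto_real_sqrt)
  then show ?thesis by (simp add: l2_norm_Wt)
qed

lemma trunc_fin_supp:
  assumes fin: "\<And>n. finite {a. l a \<le> n}"
  shows "trunc l n x \<in> fin_supp"
proof -
  have "{a. trunc l n x a \<noteq> 0} \<subseteq> {a. l a \<le> n}" by (auto simp: trunc_def split: if_splits)
  then show ?thesis unfolding fin_supp_def using fin finite_subset by blast
qed

lemma diag_trunc: "diag_op l (trunc l n x) = trunc l n (diag_op l x)"
  by (auto simp: diag_op_def trunc_def)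

lemma diag_fin_supp: "x \<in> fin_supp \<Longrightarrow> diag_op l x \<in> fin_supp"
proof -
  assume "x \<in> fin_supp"
  moreover have "{a. diag_op l x a \<noteq> 0} \<subseteq> {a. x a \<noteq> 0}" by (auto simp: diag_op_def)
  ultimately show ?thesis unfolding fin_supp_def using finite_subset by blast
qed

lemma coord_tendsto:
  assumes u: "\<And>n. u n \<in> l2 d" and v: "v \<in> l2 d" and da: "d a \<ge> 1"
    and lim: "(\<lambda>n. l2_norm d (u n - v)) \<longlonglongrightarrow> 0"
  shows "(\<lambda>n. u n a) \<longlonglongrightarrow> v a"
proof -
  have "(\<lambda>n. u n a - v a) \<longlonglongrightarrow> 0"
  proof (rule Lim_null_comparison[OF _ lim])
    show "\<forall>\<^sub>F n in sequentially. norm (u n a - v a) \<le> l2_norm d (u n - v)"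
    proof (rule always_eventually, rule allI)
      fix n
      have "u n - v \<in> l2 d" using l2_diff[OF u v] by blast
      from cmod_le_l2_norm[OF this da] show "norm (u n a - v a) \<le> l2_norm d (u n - v)" by simp
    qed
  qed
  then show ?thesis by (rule LIM_zero_cancel)
qed

lemma closure_unique:
  assumes d1: "\<And>a. d a \<ge> 1" and xy: "(x, y) \<in> closure_graph d fin_supp (diag_op l)"
  shows "y = diag_op l x"
proof -
  from xy obtain xs where x: "x \<in> l2 d" and y: "y \<in> l2 d" and xs: "\<And>n. xs n \<in> fin_supp"
    and l1: "(\<lambda>n. l2_norm d (xs n - x)) \<longlonglongrightarrow> 0"
    and l2: "(\<lambda>n. l2_norm d (diag_op l (xs n) - y)) \<longlonglongrightarrow> 0"
    unfolding closure_graph_def by blast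
  show ?thesis
  proof
    fix a
    have "(\<lambda>n. xs n a) \<longlonglongrightarrow> x a"
      by (rule coord_tendsto[OF fin_supp_l2[OF xs] x d1 l1])
    then have "(\<lambda>n. of_nat (l a) * xs n a) \<longlonglongrightarrow> of_nat (l a) * x a"
      by (rule tendsto_mult_left)
    moreover have "(\<lambda>n. diag_op l (xs n) a) \<longlonglongrightarrow> y a"
      by (rule coord_tendsto[OF fin_supp_l2[OF diag_fin_supp[OF xs]] y d1 l2])
    ultimately show "y a = diag_op l x a"
      unfolding diag_op_def by (metis LIMSEQ_unique)
  qed
qed

lemma closure_intro:
  assumes fin: "\<And>n. finite {a. l a \<le> n}" and x: "x \<in> l2 d" and dx: "diag_op l x \<in> l2 d"
  shows "(x, diag_op l x) \<in> closure_graph d fin_supp (diag_op l)"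
  unfolding closure_graph_def
  using x dx trunc_fin_supp[OF fin] trunc_l2_norm_tendsto[OF fin x] trunc_l2_norm_tendsto[OF fin dx]
  by (auto simp: diag_trunc intro!: exI[of _ "\<lambda>n. trunc l n x"])

lemma Dt_dom_char:
  assumes d1: "\<And>a. d a \<ge> 1" and fin: "\<And>n. finite {a. l a \<le> n}"
  shows "x \<in> Dt_dom d l \<longleftrightarrow> x \<in> l2 d \<and> diag_op l x \<in> l2 d"
proof
  assume "x \<in> Dt_dom d l"
  then obtain y where xy: "(x, y) \<in> closure_graph d fin_supp (diag_op l)"
    unfolding Dt_dom_def by blast
  then have "y = diag_op l x" by (rule closure_unique[OF d1])
  then show "x \<in> l2 d \<and> diag_op l x \<in> l2 d" using xy unfolding closure_graph_def by blast
next
  assume "x \<in> l2 d \<and> diag_op l x \<in> l2 d"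
  then show "x \<in> Dt_dom d l" unfolding Dt_dom_def using closure_intro[OF fin] by blast
qed

lemma Dt_eq:
  assumes d1: "\<And>a. d a \<ge> 1" and fin: "\<And>n. finite {a. l a \<le> n}" and x: "x \<in> Dt_dom d l"
  shows "Dt d l x = diag_op l x"
proof -
  have "x \<in> l2 d \<and> diag_op l x \<in> l2 d" using x Dt_dom_char[of d l x, OF d1 fin] by blast
  then have c: "(x, diag_op l x) \<in> closure_graph d fin_supp (diag_op l)"
    using closure_intro[OF fin] by blast
  show ?thesis unfolding Dt_def
  proof (rule the_equality)
    show "(x, diag_op l x) \<in> closure_graph d fin_supp (diag_op l)" by (rule c)
  next
    fix y assume "(x, y) \<in> closure_graph d fin_supp (diag_op l)"
    then show "y = diag_op l x" by (rule closure_unique[OF d1])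
  qed
qed

lemma l2_inner_single:
  assumes "\<And>b. b \<noteq> a \<Longrightarrow> x b = 0"
  shows "l2_inner d x w = of_nat ((d a)\<^sup>2) * cnj (x a) * w a"
proof -
  have "l2_inner d x w = infsum (\<lambda>b. of_nat ((d b)\<^sup>2) * cnj (x b) * w b) {a}"
    unfolding l2_inner_def by (rule infsum_cong_neutral) (use assms in auto)
  then show ?thesis by simp
qed

lemma fin_supp_Dt_dom:
  assumes d1: "\<And>a. d a \<ge> 1" and fin: "\<And>n. finite {a. l a \<le> n}" and x: "x \<in> fin_supp"
  shows "x \<in> Dt_dom d l"
  using Dt_dom_char[of d l x, OF d1 fin] fin_supp_l2[OF x] fin_supp_l2[OF diag_fin_supp[OF x]] by blast

lemma self_adj:
  assumes d1: "\<And>a. d a \<ge> 1" and fin: "\<And>n. finite {a. l a \<le> n}"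
  shows "self_adjoint d (Dt_dom d l) (Dt d l)"
  unfolding self_adjoint_def
proof (intro conjI ballI)
  have char: "\<And>x. x \<in> Dt_dom d l \<longleftrightarrow> x \<in> l2 d \<and> diag_op l x \<in> l2 d"
    using Dt_dom_char[of d l, OF d1 fin] by blast
  have eq: "\<And>x. x \<in> Dt_dom d l \<Longrightarrow> Dt d l x = diag_op l x"
    using Dt_eq[of d l, OF d1 fin] by blast
  show "dense_in_l2 d (Dt_dom d l)"
    unfolding dense_in_l2_def
  proof (intro conjI ballI allI impI)
    show "Dt_dom d l \<subseteq> l2 d" using char by blast
  next
    fix x and \<epsilon> :: real assume x: "x \<in> l2 d" and e: "\<epsilon> > 0"
    have "\<forall>\<^sub>F n in sequentially. l2_norm d (trunc l n x - x) < \<epsilon>"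
      using order_tendstoD(2)[OF trunc_l2_norm_tendsto[OF fin x] e] .
    then obtain n where "l2_norm d (trunc l n x - x) < \<epsilon>"
      unfolding eventually_sequentially by blast
    moreover have "trunc l n x \<in> Dt_dom d l"
      by (rule fin_supp_Dt_dom[of d l, OF d1 fin trunc_fin_supp[OF fin]])
    ultimately show "\<exists>y\<in>Dt_dom d l. l2_norm d (x - y) < \<epsilon>"
      using l2_norm_commute by metis
  qed
next
  have char: "\<And>x. x \<in> Dt_dom d l \<longleftrightarrow> x \<in> l2 d \<and> diag_op l x \<in> l2 d"
    using Dt_dom_char[of d l, OF d1 fin] by blast
  have eq: "\<And>x. x \<in> Dt_dom d l \<Longrightarrow> Dt d l x = diag_op l x"
    using Dt_eq[of d l, OF d1 fin] by blast
  fix x assume "x \<in> Dt_dom d l"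
  then show "Dt d l x \<in> l2 d" using char eq by simp
next
  have char: "\<And>x. x \<in> Dt_dom d l \<longleftrightarrow> x \<in> l2 d \<and> diag_op l x \<in> l2 d"
    using Dt_dom_char[of d l, OF d1 fin] by blast
  have eq: "\<And>x. x \<in> Dt_dom d l \<Longrightarrow> Dt d l x = diag_op l x"
    using Dt_eq[of d l, OF d1 fin] by blast
  show "adjoint_graph d (Dt_dom d l) (Dt d l) = {(x, Dt d l x) |x. x \<in> Dt_dom d l}"
  proof (rule set_eqI, rule iffI)
    fix p assume p: "p \<in> adjoint_graph d (Dt_dom d l) (Dt d l)"
    obtain y z where pyz: "p = (y, z)" by (cases p)
    have y: "y \<in> l2 d" and z: "z \<in> l2 d"
      and adj: "\<And>x. x \<in> Dt_dom d l \<Longrightarrow> l2_inner d (Dt d l x) y = l2_inner d x z"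
      using p unfolding pyz adjoint_graph_def by auto
    have zy: "z = diag_op l y"
    proof
      fix a :: 'a
      define \<delta> where "\<delta> = (\<lambda>b. if b = a then (1::complex) else 0)"
      have "\<delta> \<in> fin_supp" unfolding fin_supp_def \<delta>_def by simp
      then have dd: "\<delta> \<in> Dt_dom d l" by (rule fin_supp_Dt_dom[of d l, OF d1 fin])
      have "l2_inner d (Dt d l \<delta>) y = of_nat ((d a)\<^sup>2) * cnj (diag_op l \<delta> a) * y a"
        unfolding eq[OF dd] by (rule l2_inner_single) (simp add: \<delta>_def diag_op_def)
      moreover have "l2_inner d \<delta> z = of_nat ((d a)\<^sup>2) * cnj (\<delta> a) * z a"
        by (rule l2_inner_single) (simp add: \<delta>_def)
      ultimately have "of_nat ((d a)\<^sup>2) * (of_nat (l a) * y a) = of_nat ((d a)\<^sup>2) * z a"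
        using adj[OF dd] by (simp add: \<delta>_def diag_op_def)
      moreover have "(of_nat ((d a)\<^sup>2) :: complex) \<noteq> 0" using d1[of a] by simp
      ultimately show "z a = diag_op l y a" by (simp add: diag_op_def)
    qed
    then have "y \<in> Dt_dom d l" using char y z by simp
    then show "p \<in> {(x, Dt d l x) |x. x \<in> Dt_dom d l}" using pyz zy eq by auto
  next
    fix p assume "p \<in> {(x, Dt d l x) |x. x \<in> Dt_dom d l}"
    then obtain y where p: "p = (y, Dt d l y)" and y: "y \<in> Dt_dom d l" by blast
    have "l2_inner d (Dt d l x) y = l2_inner d x (Dt d l y)" if x: "x \<in> Dt_dom d l" for x
      unfolding eq[OF x] eq[OF y] l2_inner_def diag_op_def by (simp add: mult.assoc mult.left_commute)
    then show "p \<in> adjoint_graph d (Dt_dom d l) (Dt d l)"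
      unfolding adjoint_graph_def p using y char eq by auto
  qed
qed

definition Rs :: "('a \<Rightarrow> nat) \<Rightarrow> ('a \<Rightarrow> complex) \<Rightarrow> 'a \<Rightarrow> complex" where
  "Rs l y = (\<lambda>a. y a / (of_nat (l a) - \<i>))"

lemma cmod_li_ge: "cmod (of_nat n - \<i>) \<ge> 1" "cmod (of_nat n - \<i>) \<ge> real n"
proof -
  show "cmod (of_nat n - \<i>) \<ge> 1"
    using abs_Im_le_cmod[of "of_nat n - \<i>"] by simp
  show "cmod (of_nat n - \<i>) \<ge> real n"
    using abs_Re_le_cmod[of "of_nat n - \<i>"] by simp
qed

lemma li_nz: "(of_nat n - \<i>) \<noteq> (0::complex)"
  using cmod_li_ge(1)[of n] by auto

lemma cmod_Rs_le: "cmod (Rs l y a) \<le> 1 * cmod (y a)"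
proof -
  have "cmod (Rs l y a) = cmod (y a) / cmod (of_nat (l a) - \<i>)"
    by (simp add: Rs_def norm_divide)
  also have "\<dots> \<le> cmod (y a) / 1"
    using cmod_li_ge(1)[of "l a"] by (intro divide_left_mono) auto
  finally show ?thesis by simp
qed

lemma cmod_Rs_le_M:
  assumes "l a \<ge> Suc M"
  shows "cmod (Rs l y a) \<le> cmod (y a) / real (Suc M)"
proof -
  have "cmod (Rs l y a) = cmod (y a) / cmod (of_nat (l a) - \<i>)"
    by (simp add: Rs_def norm_divide)
  also have "\<dots> \<le> cmod (y a) / real (Suc M)"
    using cmod_li_ge(2)[of "l a"] cmod_li_ge(1)[of "l a"] assms
    by (intro divide_left_mono) (auto intro!: mult_pos_pos)
  finally show ?thesis .
qed

lemma cmod_diag_Rs_le: "cmod (diag_op l (Rs l y) a) \<le> 1 * cmod (y a)"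
proof -
  have "cmod (diag_op l (Rs l y) a) = real (l a) * cmod (y a) / cmod (of_nat (l a) - \<i>)"
    by (simp add: Rs_def diag_op_def norm_divide norm_mult)
  also have "\<dots> \<le> real (l a) * cmod (y a) / real (l a)"
  proof (cases "l a = 0")
    case False
    then show ?thesis using cmod_li_ge(2)[of "l a"] cmod_li_ge(1)[of "l a"]
      by (intro divide_left_mono) (auto intro!: mult_pos_pos)
  qed simp
  also have "\<dots> \<le> 1 * cmod (y a)" by (cases "l a = 0") auto
  finally show ?thesis .
qed

lemma Rs_l2: "y \<in> l2 d \<Longrightarrow> Rs l y \<in> l2 d"
  using l2_compare[of y d "Rs l y" 1, OF _ cmod_Rs_le] by blast

lemma Rs_estimate:
  assumes v: "v \<in> l2 d" and fin: "finite {a. l a \<le> M}"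
  shows "Wt d (Rs l v) \<le> sum (nsq d v) {a. l a \<le> M} + Wt d v / (real (Suc M))\<^sup>2"
proof -
  define c where "c = 1 / (real (Suc M))\<^sup>2"
  have c0: "c \<ge> 0" by (simp add: c_def)
  define g where "g = (\<lambda>a. if l a \<le> M then nsq d v a else 0)"
  have sv: "nsq d v summable_on UNIV" using v by (simp add: l2_iff)
  have sg: "g summable_on UNIV"
    by (rule finite_nonzero_values_imp_summable_on) (auto simp: g_def intro: finite_subset[OF _ fin])
  have s2: "(\<lambda>a. c * nsq d v a) summable_on UNIV"
    using sv by (rule summable_on_cmult_right)
  have s: "(\<lambda>a. g a + c * nsq d v a) summable_on UNIV"
    by (rule summable_on_add[OF sg s2])
  have pt: "nsq d (Rs l v) a \<le> g a + c * nsq d v a" for a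
  proof (cases "l a \<le> M")
    case True
    have "(cmod (Rs l v a))\<^sup>2 \<le> (cmod (v a))\<^sup>2"
      using cmod_Rs_le[of l v a] by (intro power_mono) auto
    then have "nsq d (Rs l v) a \<le> nsq d v a" unfolding nsq_def by (intro mult_left_mono) auto
    moreover have "c * nsq d v a \<ge> 0" using c0 by (simp add: nsq_nonneg)
    ultimately show ?thesis using True by (simp add: g_def)
  next
    case False
    have "(cmod (Rs l v a))\<^sup>2 \<le> (cmod (v a) / real (Suc M))\<^sup>2"
      using cmod_Rs_le_M[of M l a v] False by (intro power_mono) auto
    then have "nsq d (Rs l v) a \<le> (real (d a))\<^sup>2 * (cmod (v a) / real (Suc M))\<^sup>2"
      unfolding nsq_def by (intro mult_left_mono) auto
    then show ?thesis using False by (simp add: g_def nsq_def power_divide c_def)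
  qed
  have sR: "nsq d (Rs l v) summable_on UNIV" using Rs_l2[OF v] by (simp add: l2_iff)
  have "Wt d (Rs l v) \<le> infsum (\<lambda>a. g a + c * nsq d v a) UNIV"
    unfolding Wt_def by (rule infsum_mono[OF sR s pt])
  also have "\<dots> = infsum g UNIV + infsum (\<lambda>a. c * nsq d v a) UNIV"
    by (rule infsum_add[OF sg s2])
  also have "infsum g UNIV = infsum (nsq d v) {a. l a \<le> M}"
    unfolding g_def by (rule infsum_cong_neutral) auto
  also have "\<dots> = sum (nsq d v) {a. l a \<le> M}" using fin by simp
  also have "infsum (\<lambda>a. c * nsq d v a) UNIV = Wt d v / (real (Suc M))\<^sup>2"
    unfolding Wt_def c_def by (subst infsum_cmult_right') simp
  finally show ?thesis .
qed

lemma compact_Rs: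
  assumes d1: "\<And>a. d a \<ge> 1" and fin: "\<And>n. finite {a. l a \<le> n}"
  shows "compact_operator d (Rs l)"
  unfolding compact_operator_def
proof (intro conjI ballI allI impI)
  fix x assume "x \<in> l2 d" then show "Rs l x \<in> l2 d" by (rule Rs_l2)
next
  fix xs :: "nat \<Rightarrow> 'a \<Rightarrow> complex" and B :: real
  assume H: "\<forall>n. xs n \<in> l2 d \<and> l2_norm d (xs n) \<le> B"
  have xl2: "\<And>n. xs n \<in> l2 d" and xB: "\<And>n. l2_norm d (xs n) \<le> B" using H by auto
  have B0: "B \<ge> 0"
  proof -
    have "0 \<le> l2_norm d (xs 0)" unfolding l2_norm_Wt by (rule real_sqrt_ge_zero[OF Wt_nonneg])
    then show ?thesis using xB[of 0] by linarith
  qed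
  have WB: "Wt d (xs n) \<le> B\<^sup>2" for n
  proof -
    have "sqrt (Wt d (xs n)) \<le> B" using xB[of n] by (simp add: l2_norm_Wt)
    then have "(sqrt (Wt d (xs n)))\<^sup>2 \<le> B\<^sup>2" by (intro power_mono) (auto simp: Wt_nonneg)
    then show ?thesis using Wt_nonneg[of d "xs n"] by simp
  qed
  have coordB: "cmod (xs n a) \<le> B" for n a
    using cmod_le_l2_norm[OF xl2[of n] d1[of a]] xB[of n] by linarith
  have cnt: "countable (UNIV :: 'a set)"
  proof -
    have "UNIV = (\<Union>n. {a. l a \<le> n})" by auto
    moreover have "countable (\<Union>n. {a. l a \<le> n})"
      using fin by (intro countable_UN) (simp_all add: countable_finite)
    ultimately show ?thesis by simp
  qed
  define en where "en = from_nat_into (UNIV :: 'a set)"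
  have en_surj: "\<exists>k. en k = a" for a using from_nat_into_surj[OF cnt, of a] en_def by blast
  define P where "P = (\<lambda>k (s::nat\<Rightarrow>nat). convergent (\<lambda>n. xs (s n) (en k)))"
  interpret S: subseqs P
  proof
    fix k and s :: "nat \<Rightarrow> nat" assume "strict_mono s"
    have "bounded (range (\<lambda>n. xs (s n) (en k)))" unfolding bounded_iff using coordB by blast
    from bounded_imp_convergent_subsequence[OF this] obtain L r
      where "strict_mono r" "((\<lambda>n. xs (s n) (en k)) \<circ> r) \<longlonglongrightarrow> L" by blast
    then show "\<exists>r'. strict_mono r' \<and> P k (s \<circ> r')"
      unfolding P_def convergent_def by (auto simp: o_def)
  qed
  define r where "r = S.diagseq"
  have rmono: "strict_mono r" unfolding r_def by (rule S.subseq_diagseq)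
  have conv: "convergent (\<lambda>n. xs (r n) a)" for a
  proof -
    obtain k where k: "en k = a" using en_surj by blast
    have "P k (S.diagseq \<circ> (+) (Suc k))"
    proof (rule S.diagseq_holds)
      fix r' s n assume "strict_mono (r' :: nat \<Rightarrow> nat)" "P n s"
      then show "P n (s \<circ> r')" unfolding P_def convergent_def
        using LIMSEQ_subseq_LIMSEQ by (fastforce simp: o_def)
    qed
    then have "convergent (\<lambda>n. xs (r (Suc k + n)) a)" unfolding P_def r_def using k by (simp add: o_def)
    then obtain L where "(\<lambda>n. xs (r (Suc k + n)) a) \<longlonglongrightarrow> L" unfolding convergent_def by blast
    then have "(\<lambda>n. xs (r (n + Suc k)) a) \<longlonglongrightarrow> L" by (simp add: add.commute)
    then have "(\<lambda>n. xs (r n) a) \<longlonglongrightarrow> L" by (rule LIMSEQ_offset)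
    then show ?thesis unfolding convergent_def by blast
  qed
  define u where "u a = lim (\<lambda>n. xs (r n) a)" for a
  have ul: "(\<lambda>n. xs (r n) a) \<longlonglongrightarrow> u a" for a
    using conv[of a] unfolding u_def by (simp add: convergent_LIMSEQ_iff)
  have nsq_lim: "(\<lambda>n. sum (nsq d (xs (r n))) F) \<longlonglongrightarrow> sum (nsq d u) F" for F
    unfolding nsq_def by (intro tendsto_sum tendsto_mult tendsto_const tendsto_power tendsto_norm ul)
  have sumB: "sum (nsq d u) F \<le> B\<^sup>2" if "finite F" for F
  proof (rule LIMSEQ_le_const2[OF nsq_lim])
    show "\<exists>N. \<forall>n\<ge>N. sum (nsq d (xs (r n))) F \<le> B\<^sup>2"
    proof (intro exI allI impI)
      fix n
      have "sum (nsq d (xs (r n))) F \<le> Wt d (xs (r n))"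
        unfolding Wt_def using xl2[of "r n"] that
        by (intro finite_sum_le_infsum) (auto simp: l2_iff nsq_nonneg)
      then show "sum (nsq d (xs (r n))) F \<le> B\<^sup>2" using WB[of "r n"] by linarith
    qed
  qed
  have ul2: "u \<in> l2 d" unfolding l2_iff
    by (rule nonneg_bdd_above_summable_on) (auto simp: nsq_nonneg bdd_above_def intro!: exI[of _ "B\<^sup>2"] sumB)
  have uB: "Wt d u \<le> B\<^sup>2" unfolding Wt_def using ul2
    by (intro infsum_le_finite_sums) (auto simp: l2_iff sumB)
  define v where "v n = xs (r n) - u" for n
  have vl2: "v n \<in> l2 d" and vB: "Wt d (v n) \<le> 4 * B\<^sup>2" for n
    using l2_diff[OF xl2[of "r n"] ul2] WB[of "r n"] uB unfolding v_def by auto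
  have v0: "(\<lambda>n. v n a) \<longlonglongrightarrow> 0" for a
    unfolding v_def using tendsto_diff[OF ul[of a] tendsto_const[of "u a"]] by simp
  have WRv: "(\<lambda>n. Wt d (Rs l (v n))) \<longlonglongrightarrow> 0"
  proof (rule LIMSEQ_I)
    fix \<epsilon> :: real assume e: "\<epsilon> > 0"
    obtain M :: nat where M: "8 * B\<^sup>2 / \<epsilon> < real M" using reals_Archimedean2 by blast
    have fM: "(\<lambda>n. sum (nsq d (v n)) {a. l a \<le> M}) \<longlonglongrightarrow> 0"
    proof -
      have "(\<lambda>n. sum (nsq d (v n)) {a. l a \<le> M}) \<longlonglongrightarrow> (\<Sum>a\<in>{a. l a \<le> M}. (real (d a))\<^sup>2 * (cmod 0)\<^sup>2)"
        unfolding nsq_def by (intro tendsto_sum tendsto_mult tendsto_const tendsto_power tendsto_norm v0)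
      then show ?thesis by simp
    qed
    have "\<forall>\<^sub>F n in sequentially. sum (nsq d (v n)) {a. l a \<le> M} < \<epsilon>/2"
      using order_tendstoD(2)[OF fM, of "\<epsilon>/2"] e by auto
    then obtain N where N: "\<And>n. n \<ge> N \<Longrightarrow> sum (nsq d (v n)) {a. l a \<le> M} < \<epsilon>/2"
      unfolding eventually_sequentially by auto
    have tail: "4 * B\<^sup>2 / (real (Suc M))\<^sup>2 < \<epsilon>/2"
    proof -
      have "4 * B\<^sup>2 / (real (Suc M))\<^sup>2 \<le> 4 * B\<^sup>2 / real (Suc M)"
        by (rule divide_left_mono) (auto simp: power2_eq_square)
      also have "\<dots> < \<epsilon> / 2"
      proof -
        have "8 * B\<^sup>2 < \<epsilon> * real M" using M e by (simp add: divide_simps mult.commute)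
        then have "8 * B\<^sup>2 < \<epsilon> * real (Suc M)" using e by (simp add: distrib_left)
        then show ?thesis by (simp add: divide_simps)
      qed
      finally show ?thesis .
    qed
    show "\<exists>no. \<forall>n\<ge>no. norm (Wt d (Rs l (v n)) - 0) < \<epsilon>"
    proof (intro exI allI impI)
      fix n assume nN: "n \<ge> N"
      have a1: "Wt d (Rs l (v n)) \<le> sum (nsq d (v n)) {a. l a \<le> M} + Wt d (v n) / (real (Suc M))\<^sup>2"
        by (rule Rs_estimate[OF vl2 fin])
      have a2: "Wt d (v n) / (real (Suc M))\<^sup>2 \<le> 4 * B\<^sup>2 / (real (Suc M))\<^sup>2"
        using vB[of n] by (intro divide_right_mono) auto
      show "norm (Wt d (Rs l (v n)) - 0) < \<epsilon>"
        using a1 a2 N[OF nN] tail Wt_nonneg[of d "Rs l (v n)"] by simp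
    qed
  qed
  show "\<exists>r z. strict_mono r \<and> z \<in> l2 d \<and> (\<lambda>n. l2_norm d (Rs l (xs (r n)) - z)) \<longlonglongrightarrow> 0"
  proof (intro exI conjI)
    show "strict_mono r" by (rule rmono)
    show "Rs l u \<in> l2 d" by (rule Rs_l2[OF ul2])
    have eqW: "Wt d (Rs l (xs (r n)) - Rs l u) = Wt d (Rs l (v n))" for n
      by (rule Wt_cong) (simp add: v_def Rs_def diff_divide_distrib)
    have "(\<lambda>n. sqrt (Wt d (Rs l (v n)))) \<longlonglongrightarrow> sqrt 0" by (rule tendsto_real_sqrt[OF WRv])
    then show "(\<lambda>n. l2_norm d (Rs l (xs (r n)) - Rs l u)) \<longlonglongrightarrow> 0" by (simp add: l2_norm_Wt eqW)
  qed
qed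

lemma resolvent:
  assumes d1: "\<And>a. d a \<ge> 1" and fin: "\<And>n. finite {a. l a \<le> n}"
  shows "has_compact_resolvent d (Dt_dom d l) (Dt d l)"
  unfolding has_compact_resolvent_def
proof (intro exI[of _ "Rs l"] conjI ballI)
  fix y assume y: "y \<in> l2 d"
  have Ry: "Rs l y \<in> Dt_dom d l"
    using Dt_dom_char[of d l, OF d1 fin] Rs_l2[OF y]
      l2_compare[of y d "diag_op l (Rs l y)" 1, OF y cmod_diag_Rs_le] by blast
  show "Rs l y \<in> Dt_dom d l" by (rule Ry)
  show "(\<lambda>a. Dt d l (Rs l y) a - \<i> * Rs l y a) = y"
  proof
    fix a
    have "Dt d l (Rs l y) a - \<i> * Rs l y a = (of_nat (l a) - \<i>) * y a / (of_nat (l a) - \<i>)"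
      using Dt_eq[of d l, OF d1 fin Ry] by (simp add: diag_op_def Rs_def algebra_simps diff_divide_distrib)
    also have "\<dots> = y a" using li_nz[of "l a"] by simp
    finally show "Dt d l (Rs l y) a - \<i> * Rs l y a = y a" .
  qed
next
  fix x assume x: "x \<in> Dt_dom d l"
  show "Rs l (\<lambda>a. Dt d l x a - \<i> * x a) = x"
  proof
    fix a
    have "Rs l (\<lambda>a. Dt d l x a - \<i> * x a) a = (of_nat (l a) - \<i>) * x a / (of_nat (l a) - \<i>)"
      using Dt_eq[of d l, OF d1 fin x] by (simp add: diag_op_def Rs_def algebra_simps)
    also have "\<dots> = x a" using li_nz[of "l a"] by simp
    finally show "Rs l (\<lambda>a. Dt d l x a - \<i> * x a) a = x a" .
  qed
next
  show "compact_operator d (Rs l)" by (rule compact_Rs[OF d1 fin])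
qed

lemma wcs:
  fixes w z :: "'i \<Rightarrow> real"
  assumes w: "\<And>i. i \<in> I \<Longrightarrow> w i \<ge> 0"
  shows "(\<Sum>i\<in>I. w i * z i)\<^sup>2 \<le> (\<Sum>i\<in>I. w i) * (\<Sum>i\<in>I. w i * (z i)\<^sup>2)"
proof -
  have "(\<Sum>i\<in>I. sqrt (w i) * (sqrt (w i) * z i))\<^sup>2
        \<le> (\<Sum>i\<in>I. (sqrt (w i))\<^sup>2) * (\<Sum>i\<in>I. (sqrt (w i) * z i)\<^sup>2)"
    by (rule Cauchy_Schwarz_ineq_sum)
  moreover have "(\<Sum>i\<in>I. sqrt (w i) * (sqrt (w i) * z i)) = (\<Sum>i\<in>I. w i * z i)"
    by (rule sum.cong) (use w in \<open>auto simp: mult.assoc[symmetric]\<close>)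
  moreover have "(\<Sum>i\<in>I. (sqrt (w i))\<^sup>2) = (\<Sum>i\<in>I. w i)"
    by (rule sum.cong) (use w in auto)
  moreover have "(\<Sum>i\<in>I. (sqrt (w i) * z i)\<^sup>2) = (\<Sum>i\<in>I. w i * (z i)\<^sup>2)"
    by (rule sum.cong) (use w in \<open>auto simp: power_mult_distrib\<close>)
  ultimately show ?thesis by simp
qed

lemma fd_d1: "cqg_fusion_data e cj d N \<Longrightarrow> d a \<ge> 1"
  unfolding cqg_fusion_data_def by (elim conjE) blast
lemma fd_dcj: "cqg_fusion_data e cj d N \<Longrightarrow> d (cj a) = d a"
  unfolding cqg_fusion_data_def by (elim conjE) blast
lemma fd_fin: "cqg_fusion_data e cj d N \<Longrightarrow> finite {c. N a b c \<noteq> 0}"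
  unfolding cqg_fusion_data_def by (elim conjE) blast
lemma fd_frob: "cqg_fusion_data e cj d N \<Longrightarrow> N a b c = N (cj a) c b"
  unfolding cqg_fusion_data_def by (elim conjE) blast
lemma fd_dim: "cqg_fusion_data e cj d N \<Longrightarrow> d a * d b = (\<Sum>c\<in>{c. N a b c \<noteq> 0}. N a b c * d c)"
  unfolding cqg_fusion_data_def by (elim conjE) blast

lemma fd_finB:
  assumes fd: "cqg_fusion_data e cj d N"
  shows "finite {b. N a b c \<noteq> 0}"
proof -
  have "{b. N a b c \<noteq> 0} = {b. N (cj a) c b \<noteq> 0}" using fd_frob[OF fd] by metis
  then show ?thesis using fd_fin[OF fd] by simp
qed

lemma fd_dimC:
  assumes fd: "cqg_fusion_data e cj d N"
  shows "(\<Sum>c\<in>{c. N a b c \<noteq> 0}. real (N a b c) * real (d c)) = real (d a) * real (d b)"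
proof -
  have "real (d a * d b) = real (\<Sum>c\<in>{c. N a b c \<noteq> 0}. N a b c * d c)" using fd_dim[OF fd] by metis
  then show ?thesis by simp
qed

lemma fd_dimB:
  assumes fd: "cqg_fusion_data e cj d N"
  shows "(\<Sum>b\<in>{b. N a b c \<noteq> 0}. real (N a b c) * real (d b)) = real (d a) * real (d c)"
proof -
  have eqs: "{b. N a b c \<noteq> 0} = {b. N (cj a) c b \<noteq> 0}" using fd_frob[OF fd] by metis
  have "(\<Sum>b\<in>{b. N a b c \<noteq> 0}. real (N a b c) * real (d b))
      = (\<Sum>b\<in>{b. N (cj a) c b \<noteq> 0}. real (N (cj a) c b) * real (d b))"
    unfolding eqs by (rule sum.cong) (use fd_frob[OF fd] in auto)
  also have "\<dots> = real (d (cj a)) * real (d c)" by (rule fd_dimC[OF fd])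
  finally show ?thesis using fd_dcj[OF fd] by simp
qed

lemma fd_dle:
  assumes fd: "cqg_fusion_data e cj d N" and nz: "N a b c \<noteq> 0"
  shows "real (d c) \<le> real (d a) * real (d b)"
proof -
  have "real (N a b c) * real (d c) \<le> (\<Sum>c\<in>{c. N a b c \<noteq> 0}. real (N a b c) * real (d c))"
    by (rule member_le_sum) (use nz fd_fin[OF fd] in auto)
  moreover have "real (d c) \<le> real (N a b c) * real (d c)"
    using nz by (simp add: mult_le_cancel_right1)
  ultimately show ?thesis using fd_dimC[OF fd] by simp
qed

lemma schur_fin:
  assumes fd: "cqg_fusion_data e cj d N" and X: "\<And>b. X b \<ge> 0" and G: "finite G"
  shows "(\<Sum>c\<in>G. (real (d c))\<^sup>2 * (\<Sum>b\<in>{b. N \<alpha> b c \<noteq> 0}. real (N \<alpha> b c) * X b)\<^sup>2)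
         \<le> (real (d \<alpha>))^4 * (\<Sum>b\<in>(\<Union>c\<in>G. {b. N \<alpha> b c \<noteq> 0}). (real (d b))\<^sup>2 * (X b)\<^sup>2)"
proof -
  define B where "B c = {b. N \<alpha> b c \<noteq> 0}" for c
  define C where "C b = {c. N \<alpha> b c \<noteq> 0}" for b
  define H where "H = (\<Union>c\<in>G. B c)"
  define D where "D b = real (d b)" for b
  define n where "n b c = real (N \<alpha> b c)" for b c
  define T where "T c b = n b c * D c ^ 3 * (X b)\<^sup>2 / D b" for c b
  have D1: "D b \<ge> 1" for b using fd_d1[OF fd] unfolding D_def by simp
  have Dnz: "D b \<noteq> 0" for b using D1[of b] by simp
  have Bfin: "finite (B c)" for c unfolding B_def by (rule fd_finB[OF fd])
  have Cfin: "finite (C b)" for b unfolding C_def by (rule fd_fin[OF fd])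
  have Hfin: "finite H" unfolding H_def using G Bfin by blast
  have n0: "n b c \<ge> 0" for b c by (simp add: n_def)
  have T0: "T c b \<ge> 0" for c b using D1[of b] D1[of c] n0[of b c] unfolding T_def by simp
  have Tz: "T c b = 0" if "N \<alpha> b c = 0" for b c using that by (simp add: T_def n_def)
  have step1: "(D c)\<^sup>2 * (\<Sum>b\<in>B c. n b c * X b)\<^sup>2 \<le> D \<alpha> * (\<Sum>b\<in>B c. T c b)" for c
  proof -
    have "(\<Sum>b\<in>B c. (n b c * D b) * (X b / D b))\<^sup>2
        \<le> (\<Sum>b\<in>B c. n b c * D b) * (\<Sum>b\<in>B c. (n b c * D b) * (X b / D b)\<^sup>2)"
    proof (rule wcs)
      fix b show "0 \<le> n b c * D b" using n0[of b c] D1[of b] by simp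
    qed
    moreover have "(\<Sum>b\<in>B c. (n b c * D b) * (X b / D b)) = (\<Sum>b\<in>B c. n b c * X b)"
      by (rule sum.cong) (use Dnz in \<open>auto simp: field_simps\<close>)
    moreover have "(\<Sum>b\<in>B c. n b c * D b) = D \<alpha> * D c"
      unfolding B_def n_def D_def by (rule fd_dimB[OF fd])
    moreover have "(\<Sum>b\<in>B c. (n b c * D b) * (X b / D b)\<^sup>2) = (\<Sum>b\<in>B c. n b c * (X b)\<^sup>2 / D b)"
      by (rule sum.cong) (use Dnz in \<open>auto simp: field_simps power2_eq_square\<close>)
    ultimately have "(\<Sum>b\<in>B c. n b c * X b)\<^sup>2 \<le> D \<alpha> * D c * (\<Sum>b\<in>B c. n b c * (X b)\<^sup>2 / D b)"
      by simp
    then have "(D c)\<^sup>2 * (\<Sum>b\<in>B c. n b c * X b)\<^sup>2 \<le> (D c)\<^sup>2 * (D \<alpha> * D c * (\<Sum>b\<in>B c. n b c * (X b)\<^sup>2 / D b))"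
      by (rule mult_left_mono) simp
    also have "\<dots> = D \<alpha> * (\<Sum>b\<in>B c. T c b)"
      unfolding T_def sum_distrib_left by (rule sum.cong) (auto simp: power2_eq_square power3_eq_cube algebra_simps)
    finally show ?thesis .
  qed
  have step3: "(\<Sum>c\<in>G. \<Sum>b\<in>B c. T c b) = (\<Sum>b\<in>H. \<Sum>c\<in>G. T c b)"
  proof -
    have "(\<Sum>c\<in>G. \<Sum>b\<in>B c. T c b) = (\<Sum>c\<in>G. \<Sum>b\<in>H. T c b)"
    proof (rule sum.cong[OF refl])
      fix c assume c: "c \<in> G"
      show "(\<Sum>b\<in>B c. T c b) = (\<Sum>b\<in>H. T c b)"
        by (rule sum.mono_neutral_left[OF Hfin]) (use c Tz in \<open>auto simp: H_def B_def\<close>)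
    qed
    also have "\<dots> = (\<Sum>b\<in>H. \<Sum>c\<in>G. T c b)" by (rule sum.swap)
    finally show ?thesis .
  qed
  have step4: "(\<Sum>c\<in>G. T c b) \<le> D \<alpha> ^ 3 * ((D b)\<^sup>2 * (X b)\<^sup>2)" for b
  proof -
    have "(\<Sum>c\<in>G. T c b) = (\<Sum>c\<in>G \<inter> C b. T c b)"
      by (rule sum.mono_neutral_right[OF G]) (use Tz in \<open>auto simp: C_def\<close>)
    also have "\<dots> \<le> (\<Sum>c\<in>C b. T c b)"
      by (rule sum_mono2[OF Cfin]) (use T0 in auto)
    also have "\<dots> = (X b)\<^sup>2 / D b * (\<Sum>c\<in>C b. n b c * D c * (D c)\<^sup>2)"
      unfolding T_def sum_distrib_left by (rule sum.cong) (auto simp: power2_eq_square power3_eq_cube)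
    also have "\<dots> \<le> (X b)\<^sup>2 / D b * (\<Sum>c\<in>C b. n b c * D c * (D \<alpha> * D b)\<^sup>2)"
    proof (rule mult_left_mono)
      show "(\<Sum>c\<in>C b. n b c * D c * (D c)\<^sup>2) \<le> (\<Sum>c\<in>C b. n b c * D c * (D \<alpha> * D b)\<^sup>2)"
      proof (rule sum_mono)
        fix c assume "c \<in> C b"
        then have "D c \<le> D \<alpha> * D b" unfolding C_def D_def by (intro fd_dle[OF fd]) simp
        then have "(D c)\<^sup>2 \<le> (D \<alpha> * D b)\<^sup>2" using D1[of c] by (intro power_mono) auto
        then show "n b c * D c * (D c)\<^sup>2 \<le> n b c * D c * (D \<alpha> * D b)\<^sup>2"
          using n0[of b c] D1[of c] by (intro mult_left_mono) auto
      qed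
      show "0 \<le> (X b)\<^sup>2 / D b" using D1[of b] by simp
    qed
    also have "(\<Sum>c\<in>C b. n b c * D c * (D \<alpha> * D b)\<^sup>2) = (D \<alpha> * D b) * (D \<alpha> * D b)\<^sup>2"
      unfolding sum_distrib_right[symmetric] unfolding C_def n_def D_def by (subst fd_dimC[OF fd]) simp
    also have "(X b)\<^sup>2 / D b * ((D \<alpha> * D b) * (D \<alpha> * D b)\<^sup>2) = D \<alpha> ^ 3 * ((D b)\<^sup>2 * (X b)\<^sup>2)"
      using Dnz[of b] by (simp add: field_simps power2_eq_square power3_eq_cube)
    finally show ?thesis .
  qed
  have "(\<Sum>c\<in>G. (D c)\<^sup>2 * (\<Sum>b\<in>B c. n b c * X b)\<^sup>2) \<le> (\<Sum>c\<in>G. D \<alpha> * (\<Sum>b\<in>B c. T c b))"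
    by (rule sum_mono) (rule step1)
  also have "\<dots> = D \<alpha> * (\<Sum>b\<in>H. \<Sum>c\<in>G. T c b)"
    by (simp add: sum_distrib_left[symmetric] step3)
  also have "\<dots> \<le> D \<alpha> * (\<Sum>b\<in>H. D \<alpha> ^ 3 * ((D b)\<^sup>2 * (X b)\<^sup>2))"
    using D1[of \<alpha>] by (intro mult_left_mono sum_mono step4) auto
  also have "\<dots> = D \<alpha> ^ 4 * (\<Sum>b\<in>H. (D b)\<^sup>2 * (X b)\<^sup>2)"
    by (simp add: sum_distrib_left[symmetric] power_numeral_reduce)
  finally show ?thesis unfolding D_def n_def H_def B_def .
qed

lemma schur:
  assumes fd: "cqg_fusion_data e cj d N" and x: "x \<in> l2 d"
    and yb: "\<And>c. cmod (y c) \<le> K * (\<Sum>b\<in>{b. N \<alpha> b c \<noteq> 0}. real (N \<alpha> b c) * cmod (x b))"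
  shows "y \<in> l2 d \<and> Wt d y \<le> K\<^sup>2 * (real (d \<alpha>))^4 * Wt d x"
proof -
  define m where "m c = (\<Sum>b\<in>{b. N \<alpha> b c \<noteq> 0}. real (N \<alpha> b c) * cmod (x b))" for c
  define h where "h c = K\<^sup>2 * ((real (d c))\<^sup>2 * (m c)\<^sup>2)" for c
  have sx: "nsq d x summable_on UNIV" using x by (simp add: l2_iff)
  have h0: "h c \<ge> 0" for c by (simp add: h_def)
  have hF: "sum h F \<le> K\<^sup>2 * (real (d \<alpha>))^4 * Wt d x" if F: "finite F" for F
  proof -
    have "sum h F = K\<^sup>2 * (\<Sum>c\<in>F. (real (d c))\<^sup>2 * (m c)\<^sup>2)" by (simp add: h_def sum_distrib_left)
    also have "\<dots> \<le> K\<^sup>2 * ((real (d \<alpha>))^4 * (\<Sum>b\<in>(\<Union>c\<in>F. {b. N \<alpha> b c \<noteq> 0}). (real (d b))\<^sup>2 * (cmod (x b))\<^sup>2))"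
      unfolding m_def by (intro mult_left_mono schur_fin[OF fd _ F]) auto
    also have "(\<Sum>b\<in>(\<Union>c\<in>F. {b. N \<alpha> b c \<noteq> 0}). (real (d b))\<^sup>2 * (cmod (x b))\<^sup>2) \<le> Wt d x"
    proof -
      have "finite (\<Union>c\<in>F. {b. N \<alpha> b c \<noteq> 0})" using F fd_finB[OF fd] by blast
      then show ?thesis unfolding Wt_def using sx
        by (subst nsq_def[symmetric]) (intro finite_sum_le_infsum, auto simp: nsq_nonneg)
    qed
    then have "K\<^sup>2 * ((real (d \<alpha>))^4 * (\<Sum>b\<in>(\<Union>c\<in>F. {b. N \<alpha> b c \<noteq> 0}). (real (d b))\<^sup>2 * (cmod (x b))\<^sup>2))
        \<le> K\<^sup>2 * ((real (d \<alpha>))^4 * Wt d x)"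
      by (intro mult_left_mono) auto
    finally show ?thesis by (simp add: mult.assoc)
  qed
  have sh: "h summable_on UNIV"
    by (rule nonneg_bdd_above_summable_on) (auto simp: h0 bdd_above_def intro!: hF exI[of _ "K\<^sup>2 * (real (d \<alpha>))^4 * Wt d x"])
  have ih: "infsum h UNIV \<le> K\<^sup>2 * (real (d \<alpha>))^4 * Wt d x"
    by (rule infsum_le_finite_sums[OF sh hF]) 
  have pt: "nsq d y c \<le> h c" for c
  proof -
    have "(cmod (y c))\<^sup>2 \<le> (K * m c)\<^sup>2" using yb[of c] unfolding m_def by (intro power_mono) auto
    then have "(real (d c))\<^sup>2 * (cmod (y c))\<^sup>2 \<le> (real (d c))\<^sup>2 * (K * m c)\<^sup>2" by (intro mult_left_mono) auto
    then show ?thesis by (simp add: nsq_def h_def power_mult_distrib algebra_simps)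
  qed
  have sy: "nsq d y summable_on UNIV"
    by (rule summable_on_comparison_test[OF sh]) (use pt nsq_nonneg in auto)
  have "Wt d y \<le> infsum h UNIV" unfolding Wt_def by (rule infsum_mono[OF sy sh pt])
  then show ?thesis using ih sy by (simp add: l2_iff)
qed

lemma l2_finsum:
  assumes A: "finite A" and g: "\<And>a. a \<in> A \<Longrightarrow> g a \<in> l2 d"
    and yb: "\<And>c. cmod (y c) \<le> (\<Sum>a\<in>A. cmod (g a c))"
  shows "y \<in> l2 d \<and> Wt d y \<le> real (card A) * (\<Sum>a\<in>A. Wt d (g a))"
proof -
  have pt: "nsq d y c \<le> real (card A) * (\<Sum>a\<in>A. nsq d (g a) c)" for c
  proof -
    have "(cmod (y c))\<^sup>2 \<le> (\<Sum>a\<in>A. 1 * cmod (g a c))\<^sup>2"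
      using yb[of c] by (intro power_mono) auto
    also have "\<dots> \<le> (\<Sum>a\<in>A. 1\<^sup>2) * (\<Sum>a\<in>A. (cmod (g a c))\<^sup>2)"
      by (rule Cauchy_Schwarz_ineq_sum)
    finally have "(cmod (y c))\<^sup>2 \<le> real (card A) * (\<Sum>a\<in>A. (cmod (g a c))\<^sup>2)" by simp
    then have "(real (d c))\<^sup>2 * (cmod (y c))\<^sup>2 \<le> (real (d c))\<^sup>2 * (real (card A) * (\<Sum>a\<in>A. (cmod (g a c))\<^sup>2))"
      by (intro mult_left_mono) auto
    then show ?thesis by (simp add: nsq_def sum_distrib_left algebra_simps)
  qed
  have fb: "sum (nsq d y) F \<le> real (card A) * (\<Sum>a\<in>A. Wt d (g a))" if F: "finite F" for F
  proof -
    have "sum (nsq d y) F \<le> (\<Sum>c\<in>F. real (card A) * (\<Sum>a\<in>A. nsq d (g a) c))"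
      by (rule sum_mono) (rule pt)
    also have "\<dots> = real (card A) * (\<Sum>a\<in>A. \<Sum>c\<in>F. nsq d (g a) c)"
      by (simp add: sum_distrib_left[symmetric] sum.swap[of _ F])
    also have "\<dots> \<le> real (card A) * (\<Sum>a\<in>A. Wt d (g a))"
    proof (intro mult_left_mono sum_mono)
      fix a assume "a \<in> A"
      then show "(\<Sum>c\<in>F. nsq d (g a) c) \<le> Wt d (g a)"
        unfolding Wt_def using g[of a] F by (intro finite_sum_le_infsum) (auto simp: l2_iff nsq_nonneg)
    qed simp
    finally show ?thesis .
  qed
  have sy: "nsq d y summable_on UNIV"
    by (rule nonneg_bdd_above_summable_on) (auto simp: nsq_nonneg bdd_above_def intro!: fb exI[of _ "real (card A) * (\<Sum>a\<in>A. Wt d (g a))"])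
  have "Wt d y \<le> real (card A) * (\<Sum>a\<in>A. Wt d (g a))"
    unfolding Wt_def[of d y] by (rule infsum_le_finite_sums[OF sy fb])
  then show ?thesis using sy by (simp add: l2_iff)
qed

lemma comm_eq:
  "diag_op l (fusion_pi N f x) c - fusion_pi N f (diag_op l x) c
   = (\<Sum>a\<in>{a. f a \<noteq> 0}. f a * (\<Sum>b\<in>{b. N a b c \<noteq> 0}. of_nat (N a b c) * (of_nat (l c) - of_nat (l b)) * x b))"
proof -
  let ?A = "{a. f a \<noteq> 0}"
  let ?B = "\<lambda>a. {b. N a b c \<noteq> 0}"
  have 1: "diag_op l (fusion_pi N f x) c
      = (\<Sum>a\<in>?A. f a * (\<Sum>b\<in>?B a. of_nat (l c) * (of_nat (N a b c) * x b)))"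
    unfolding fusion_pi_def diag_op_def sum_distrib_left
    by (rule sum.cong[OF refl]) (rule sum.cong[OF refl], simp only: mult.left_commute)
  have 2: "fusion_pi N f (diag_op l x) c
      = (\<Sum>a\<in>?A. f a * (\<Sum>b\<in>?B a. of_nat (N a b c) * (of_nat (l b) * x b)))"
    unfolding fusion_pi_def diag_op_def by (rule refl)
  have 3: "f a * (\<Sum>b\<in>?B a. of_nat (l c) * (of_nat (N a b c) * x b))
         - f a * (\<Sum>b\<in>?B a. of_nat (N a b c) * (of_nat (l b) * x b))
         = f a * (\<Sum>b\<in>?B a. of_nat (N a b c) * (of_nat (l c) - of_nat (l b)) * x b)" for a
  proof -
    have "(\<Sum>b\<in>?B a. of_nat (l c) * (of_nat (N a b c) * x b)) - (\<Sum>b\<in>?B a. of_nat (N a b c) * (of_nat (l b) * x b))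
        = (\<Sum>b\<in>?B a. of_nat (l c) * (of_nat (N a b c) * x b) - of_nat (N a b c) * (of_nat (l b) * x b))"
      by (rule sum_subtractf[symmetric])
    also have "\<dots> = (\<Sum>b\<in>?B a. of_nat (N a b c) * (of_nat (l c) - of_nat (l b)) * x b)"
      by (rule sum.cong[OF refl]) (simp add: algebra_simps)
    finally show ?thesis by (simp only: right_diff_distrib[symmetric])
  qed
  show ?thesis unfolding 1 2 sum_subtractf[symmetric] 3 by (rule refl)
qed

lemma cmod_nat_diff: "cmod (of_nat p - of_nat q :: complex) = \<bar>real p - real q\<bar>"
  by (metis norm_of_real of_real_diff of_real_of_nat_eq)

lemma cmod_sum_le: "cmod (\<Sum>b\<in>B. of_nat (n b) * z b) \<le> (\<Sum>b\<in>B. real (n b) * cmod (z b))"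
proof -
  have "cmod (\<Sum>b\<in>B. of_nat (n b) * z b) \<le> (\<Sum>b\<in>B. cmod (of_nat (n b) * z b))" by (rule norm_sum)
  also have "\<dots> = (\<Sum>b\<in>B. real (n b) * cmod (z b))" by (simp add: norm_mult)
  finally show ?thesis .
qed

lemma pi_l2:
  assumes fd: "cqg_fusion_data e cj d N" and f: "f \<in> fin_supp" and x: "x \<in> l2 d"
  shows "fusion_pi N f x \<in> l2 d"
proof -
  define A where "A = {a. f a \<noteq> 0}"
  have A: "finite A" using f by (simp add: fin_supp_def A_def)
  define g where "g a = (\<lambda>c. f a * (\<Sum>b\<in>{b. N a b c \<noteq> 0}. of_nat (N a b c) * x b))" for a
  have gl2: "g a \<in> l2 d" for a
  proof -
    have "cmod (g a c) \<le> cmod (f a) * (\<Sum>b\<in>{b. N a b c \<noteq> 0}. real (N a b c) * cmod (x b))" for c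
      unfolding g_def norm_mult by (intro mult_left_mono cmod_sum_le) auto
    then show ?thesis using schur[OF fd x] by blast
  qed
  have "cmod (fusion_pi N f x c) \<le> (\<Sum>a\<in>A. cmod (g a c))" for c
    unfolding fusion_pi_def g_def A_def by (rule norm_sum)
  then show ?thesis using l2_finsum[OF A, of g d] gl2 by blast
qed

lemma comm_bound:
  assumes fd: "cqg_fusion_data e cj d N" and pl: "proper_length_function e cj N l"
    and f: "f \<in> fin_supp" and x: "x \<in> l2 d"
  shows "(\<lambda>c. diag_op l (fusion_pi N f x) c - fusion_pi N f (diag_op l x) c) \<in> l2 d \<and>
         Wt d (\<lambda>c. diag_op l (fusion_pi N f x) c - fusion_pi N f (diag_op l x) c)
           \<le> real (card {a. f a \<noteq> 0}) * (\<Sum>a\<in>{a. f a \<noteq> 0}. (cmod (f a) * real (l a))\<^sup>2 * (real (d a))^4) * Wt d x"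
proof -
  define A where "A = {a. f a \<noteq> 0}"
  have A: "finite A" using f by (simp add: fin_supp_def A_def)
  have lcj: "l (cj a) = l a" for a using pl unfolding proper_length_function_def length_function_def by blast
  have ltri: "N a b c \<noteq> 0 \<Longrightarrow> l c \<le> l a + l b" for a b c
    using pl unfolding proper_length_function_def length_function_def by blast
  have ldiff: "\<bar>real (l c) - real (l b)\<bar> \<le> real (l a)" if "N a b c \<noteq> 0" for a b c
  proof -
    have "l c \<le> l a + l b" using ltri[OF that] .
    moreover have "N (cj a) c b \<noteq> 0" using that fd_frob[OF fd, of a b c] by simp
    then have "l b \<le> l a + l c" using ltri[of "cj a" c b] lcj[of a] by simp
    ultimately show ?thesis by linarith
  qed
  define g where "g a = (\<lambda>c. f a * (\<Sum>b\<in>{b. N a b c \<noteq> 0}. of_nat (N a b c) * (of_nat (l c) - of_nat (l b)) * x b))" for a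
  have gb: "g a \<in> l2 d \<and> Wt d (g a) \<le> (cmod (f a) * real (l a))\<^sup>2 * (real (d a))^4 * Wt d x" for a
  proof -
    have "cmod (g a c) \<le> (cmod (f a) * real (l a)) * (\<Sum>b\<in>{b. N a b c \<noteq> 0}. real (N a b c) * cmod (x b))" for c
    proof -
      have "cmod (\<Sum>b\<in>{b. N a b c \<noteq> 0}. of_nat (N a b c) * (of_nat (l c) - of_nat (l b)) * x b)
          \<le> (\<Sum>b\<in>{b. N a b c \<noteq> 0}. cmod (of_nat (N a b c) * (of_nat (l c) - of_nat (l b)) * x b))"
        by (rule norm_sum)
      also have "\<dots> \<le> (\<Sum>b\<in>{b. N a b c \<noteq> 0}. real (l a) * (real (N a b c) * cmod (x b)))"
      proof (rule sum_mono)
        fix b assume "b \<in> {b. N a b c \<noteq> 0}"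
        then have "\<bar>real (l c) - real (l b)\<bar> \<le> real (l a)" using ldiff by simp
        then have "real (N a b c) * \<bar>real (l c) - real (l b)\<bar> * cmod (x b) \<le> real (N a b c) * real (l a) * cmod (x b)"
          by (intro mult_right_mono mult_left_mono) auto
        moreover have "cmod (of_nat (N a b c) * (of_nat (l c) - of_nat (l b)) * x b)
            = real (N a b c) * \<bar>real (l c) - real (l b)\<bar> * cmod (x b)"
          by (simp only: norm_mult cmod_nat_diff norm_of_nat)
        moreover have "real (N a b c) * real (l a) * cmod (x b) = real (l a) * (real (N a b c) * cmod (x b))"
          by (simp add: ac_simps)
        ultimately show "cmod (of_nat (N a b c) * (of_nat (l c) - of_nat (l b)) * x b) \<le> real (l a) * (real (N a b c) * cmod (x b))"
          by linarith
      qed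
      also have "\<dots> = real (l a) * (\<Sum>b\<in>{b. N a b c \<noteq> 0}. real (N a b c) * cmod (x b))"
        by (simp add: sum_distrib_left)
      finally show ?thesis unfolding g_def norm_mult mult.assoc by (intro mult_left_mono) auto
    qed
    then show ?thesis using schur[OF fd x] by blast
  qed
  have eqc: "diag_op l (fusion_pi N f x) c - fusion_pi N f (diag_op l x) c = (\<Sum>a\<in>A. g a c)" for c
    unfolding comm_eq g_def A_def by (rule refl)
  have cb: "cmod (diag_op l (fusion_pi N f x) c - fusion_pi N f (diag_op l x) c) \<le> (\<Sum>a\<in>A. cmod (g a c))" for c
    unfolding eqc by (rule norm_sum)
  have r: "(\<lambda>c. diag_op l (fusion_pi N f x) c - fusion_pi N f (diag_op l x) c) \<in> l2 d \<and>
      Wt d (\<lambda>c. diag_op l (fusion_pi N f x) c - fusion_pi N f (diag_op l x) c) \<le> real (card A) * (\<Sum>a\<in>A. Wt d (g a))"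
    by (rule l2_finsum[OF A]) (use gb cb in auto)
  have "real (card A) * (\<Sum>a\<in>A. Wt d (g a)) \<le> real (card A) * (\<Sum>a\<in>A. (cmod (f a) * real (l a))\<^sup>2 * (real (d a))^4 * Wt d x)"
    using gb by (intro mult_left_mono sum_mono) auto
  also have "\<dots> = real (card A) * (\<Sum>a\<in>A. (cmod (f a) * real (l a))\<^sup>2 * (real (d a))^4) * Wt d x"
    by (simp add: sum_distrib_right mult.assoc)
  finally show ?thesis using r unfolding A_def by linarith
qed

theorem lemma3p2:
  fixes e :: 'a and cj :: "'a \<Rightarrow> 'a" and d :: "'a \<Rightarrow> nat"
    and N :: "'a \<Rightarrow> 'a \<Rightarrow> 'a \<Rightarrow> nat" and l :: "'a \<Rightarrow> nat"
  assumes "cqg_fusion_data e cj d N"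
    and "proper_length_function e cj N l"
  shows "self_adjoint d (Dt_dom d l) (Dt d l) \<and>
         has_compact_resolvent d (Dt_dom d l) (Dt d l) \<and>
         (\<forall>f\<in>fusion_algebra. bounded_commutator d (Dt_dom d l) (Dt d l) (fusion_pi N f))"
proof -
  note fd = assms(1) and pl = assms(2)
  have d1: "\<And>a. d a \<ge> 1" using fd_d1[OF fd] by blast
  have fin: "\<And>n. finite {a. l a \<le> n}" using pl unfolding proper_length_function_def by blast
  have char: "\<And>x. x \<in> Dt_dom d l \<longleftrightarrow> x \<in> l2 d \<and> diag_op l x \<in> l2 d"
    using Dt_dom_char[of d l, OF d1 fin] by blast
  have eq: "\<And>x. x \<in> Dt_dom d l \<Longrightarrow> Dt d l x = diag_op l x"
    using Dt_eq[of d l, OF d1 fin] by blast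
  have bc: "bounded_commutator d (Dt_dom d l) (Dt d l) (fusion_pi N f)" if f: "f \<in> fin_supp" for f
    unfolding bounded_commutator_def
  proof (intro conjI ballI)
    fix x assume x: "x \<in> Dt_dom d l"
    then have xl: "x \<in> l2 d" and dxl: "diag_op l x \<in> l2 d" using char by auto
    have pxl: "fusion_pi N f x \<in> l2 d" by (rule pi_l2[OF fd f xl])
    have "diag_op l (fusion_pi N f x) = (\<lambda>c. fusion_pi N f (diag_op l x) c +
            (diag_op l (fusion_pi N f x) c - fusion_pi N f (diag_op l x) c))"
      by auto
    moreover have "(\<lambda>c. fusion_pi N f (diag_op l x) c +
            (diag_op l (fusion_pi N f x) c - fusion_pi N f (diag_op l x) c)) \<in> l2 d"
      using l2_add[OF pi_l2[OF fd f dxl] comm_bound[OF fd pl f xl, THEN conjunct1]] by blast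
    ultimately show "fusion_pi N f x \<in> Dt_dom d l" using char pxl by simp
  next
    define K where "K = real (card {a. f a \<noteq> 0}) * (\<Sum>a\<in>{a. f a \<noteq> 0}. (cmod (f a) * real (l a))\<^sup>2 * (real (d a))^4)"
    show "\<exists>C. \<forall>x\<in>Dt_dom d l. l2_norm d (Dt d l (fusion_pi N f x) - fusion_pi N f (Dt d l x)) \<le> C * l2_norm d x"
    proof (intro exI ballI)
      fix x assume x: "x \<in> Dt_dom d l"
      then have xl: "x \<in> l2 d" and dxl: "diag_op l x \<in> l2 d" using char by auto
      have pxl: "fusion_pi N f x \<in> l2 d" by (rule pi_l2[OF fd f xl])
      have "fusion_pi N f x \<in> Dt_dom d l"
      proof -
        have "diag_op l (fusion_pi N f x) = (\<lambda>c. fusion_pi N f (diag_op l x) c +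
                (diag_op l (fusion_pi N f x) c - fusion_pi N f (diag_op l x) c))"
          by auto
        moreover have "(\<lambda>c. fusion_pi N f (diag_op l x) c +
                (diag_op l (fusion_pi N f x) c - fusion_pi N f (diag_op l x) c)) \<in> l2 d"
          using l2_add[OF pi_l2[OF fd f dxl] comm_bound[OF fd pl f xl, THEN conjunct1]] by blast
        ultimately show ?thesis using char pxl by simp
      qed
      then have e1: "Dt d l (fusion_pi N f x) - fusion_pi N f (Dt d l x)
          = (\<lambda>c. diag_op l (fusion_pi N f x) c - fusion_pi N f (diag_op l x) c)"
        using eq[OF x] eq by (auto simp: fun_diff_def)
      have W: "Wt d (Dt d l (fusion_pi N f x) - fusion_pi N f (Dt d l x)) \<le> K * Wt d x"
        unfolding e1 K_def using comm_bound[OF fd pl f xl] by blast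
      have "l2_norm d (Dt d l (fusion_pi N f x) - fusion_pi N f (Dt d l x)) \<le> sqrt (K * Wt d x)"
        unfolding l2_norm_Wt using W by (rule real_sqrt_le_mono)
      also have "\<dots> = sqrt K * l2_norm d x" by (simp add: l2_norm_Wt real_sqrt_mult)
      finally show "l2_norm d (Dt d l (fusion_pi N f x) - fusion_pi N f (Dt d l x)) \<le> sqrt K * l2_norm d x" .
    qed
  qed
  show ?thesis using self_adj[of d l, OF d1 fin] resolvent[of d l, OF d1 fin] bc by blast
qed

end
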